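(* Let $\varkappa_+,\varkappa_-$ be nonnegative integers with $N=\varkappa_++\varkappa_-\ge1$, and let $x\in\mathbb{C}\setminus\mathbb{Z}$. Then $$\sum_{(c'_1,\dots,c'_N)}\ \prod_{i=1}^{N}\frac{1}{x+c'_i}=\frac{\binom{\varkappa_++\varkappa_-}{\varkappa_+}}{\prod_{i=1}^{\varkappa_+}(x+i)\prod_{j=1}^{\varkappa_-}(x-j)},$$ where the sum runs over all integer sequences $(c'_1,\dots,c'_N)$ such that, with $c'_0=0$, $|c'_{i+1}-c'_i|=1$ for $i=0,\dots,N-1$ and $c'_N=\varkappa_+-\varkappa_-$. *)

theory Defs
  imports Complex_Main
begin

definition lattice_paths :: "nat \<Rightarrow> int \<Rightarrow> int list set" where
  "lattice_paths N e = {cs. length cs = N \<and>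
      (\<forall>i<N. \<bar>(0 # cs) ! (Suc i) - (0 # cs) ! i\<bar> = 1) \<and>
      (0 # cs) ! N = e}"

end

theory Submission
  imports Defs
begin

lemma lp_Suc:
  "lattice_paths (Suc N) e = (\<lambda>ds. ds @ [e]) ` (lattice_paths N (e-1) \<union> lattice_paths N (e+1))"
proof (intro equalityI subsetI)
  fix cs assume cs: "cs \<in> lattice_paths (Suc N) e"
  then have len: "length cs = Suc N" and st: "\<forall>i<Suc N. \<bar>(0#cs)!Suc i - (0#cs)!i\<bar> = 1"
    and en: "(0#cs)!Suc N = e" by (auto simp: lattice_paths_def)
  obtain ds y where cs_eq: "cs = ds @ [y]" using len by (metis length_Suc_conv_rev)
  with len have ld: "length ds = N" by simp
  have y: "y = e" using en cs_eq ld by (simp add: nth_append)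
  have st': "\<forall>i<N. \<bar>(0#ds)!Suc i - (0#ds)!i\<bar> = 1"
  proof (intro allI impI)
    fix i assume i: "i<N"
    then have "\<bar>(0#cs)!Suc i - (0#cs)!i\<bar> = 1" using st by simp
    moreover have "(0#cs)!Suc i = (0#ds)!Suc i" "(0#cs)!i = (0#ds)!i"
      using i cs_eq ld by (auto simp: nth_append nth_Cons')
    ultimately show "\<bar>(0#ds)!Suc i - (0#ds)!i\<bar> = 1" by simp
  qed
  have "\<bar>(0#cs)!Suc N - (0#cs)!N\<bar> = 1" using st by simp
  moreover have "(0#cs)!N = (0#ds)!N" using cs_eq ld by (simp add: nth_append nth_Cons')
  ultimately have "\<bar>e - (0#ds)!N\<bar> = 1" using en by simp
  then have "(0#ds)!N = e-1 \<or> (0#ds)!N = e+1" by auto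
  then have "ds \<in> lattice_paths N (e-1) \<union> lattice_paths N (e+1)"
    using ld st' by (auto simp: lattice_paths_def)
  then show "cs \<in> (\<lambda>ds. ds @ [e]) ` (lattice_paths N (e-1) \<union> lattice_paths N (e+1))"
    using cs_eq y by blast
next
  fix cs assume "cs \<in> (\<lambda>ds. ds @ [e]) ` (lattice_paths N (e-1) \<union> lattice_paths N (e+1))"
  then obtain ds where cs_eq: "cs = ds @ [e]" and ds: "ds \<in> lattice_paths N (e-1) \<union> lattice_paths N (e+1)"
    by blast
  from ds have ld: "length ds = N" and st: "\<forall>i<N. \<bar>(0#ds)!Suc i - (0#ds)!i\<bar> = 1"
    and en: "(0#ds)!N = e-1 \<or> (0#ds)!N = e+1" by (auto simp: lattice_paths_def)
  have "\<forall>i<Suc N. \<bar>(0#cs)!Suc i - (0#cs)!i\<bar> = 1"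
  proof (intro allI impI)
    fix i assume i: "i < Suc N"
    show "\<bar>(0#cs)!Suc i - (0#cs)!i\<bar> = 1"
    proof (cases "i < N")
      case True
      have "(0#cs)!Suc i = (0#ds)!Suc i" "(0#cs)!i = (0#ds)!i"
        using True cs_eq ld by (auto simp: nth_append nth_Cons')
      then show ?thesis using st True by simp
    next
      case False
      then have iN: "i = N" using i by simp
      have "(0#cs)!Suc N = e" "(0#cs)!N = (0#ds)!N"
        using cs_eq ld by (simp_all add: nth_append nth_Cons')
      then show ?thesis using iN en by auto
    qed
  qed
  moreover have "(0#cs)!Suc N = e" using cs_eq ld by (simp add: nth_append)
  ultimately show "cs \<in> lattice_paths (Suc N) e" using cs_eq ld by (simp add: lattice_paths_def)
qed

lemma lp_finite: "finite (lattice_paths N e)"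
proof (induction N arbitrary: e)
  case 0
  have "lattice_paths 0 e \<subseteq> {[]}" by (auto simp: lattice_paths_def)
  then show ?case using finite_subset by blast
next
  case (Suc N)
  then show ?case by (simp add: lp_Suc)
qed

lemma lp_empty: "\<bar>e\<bar> > int N \<Longrightarrow> lattice_paths N e = {}"
proof (induction N arbitrary: e)
  case 0
  then show ?case by (auto simp: lattice_paths_def)
next
  case (Suc N)
  then have "lattice_paths N (e-1) = {}" "lattice_paths N (e+1) = {}" by auto
  then show ?case by (simp add: lp_Suc)
qed

definition F :: "complex \<Rightarrow> nat \<Rightarrow> int \<Rightarrow> complex" where
  "F x N e = (\<Sum>cs\<in>lattice_paths N e. \<Prod>i<N. 1 / (x + of_int (cs ! i)))"

lemma F_Suc: "F x (Suc N) e = (F x N (e-1) + F x N (e+1)) / (x + of_int e)"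
proof -
  have inj: "inj_on (\<lambda>ds. ds @ [e]) A" for A :: "int list set" by (auto simp: inj_on_def)
  have disj: "lattice_paths N (e-1) \<inter> lattice_paths N (e+1) = {}"
    by (auto simp: lattice_paths_def)
  have pr: "(\<Prod>i<Suc N. 1 / (x + of_int ((ds @ [e]) ! i))) = (\<Prod>i<N. 1 / (x + of_int (ds ! i))) / (x + of_int e)"
    if "ds \<in> lattice_paths N (e-1) \<union> lattice_paths N (e+1)" for ds
  proof -
    have ld: "length ds = N" using that by (auto simp: lattice_paths_def)
    have "(\<Prod>i<N. 1 / (x + of_int ((ds @ [e]) ! i))) = (\<Prod>i<N. 1 / (x + of_int (ds ! i)))"
      by (rule prod.cong) (auto simp: nth_append ld)
    then show ?thesis by (simp add: ld nth_append)
  qed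
  have "F x (Suc N) e = (\<Sum>ds\<in>lattice_paths N (e-1) \<union> lattice_paths N (e+1).
        (\<Prod>i<Suc N. 1 / (x + of_int ((ds @ [e]) ! i))))"
    unfolding F_def lp_Suc by (subst sum.reindex) (auto intro: inj)
  also have "\<dots> = (\<Sum>ds\<in>lattice_paths N (e-1) \<union> lattice_paths N (e+1).
        (\<Prod>i<N. 1 / (x + of_int (ds ! i))) / (x + of_int e))"
    by (intro sum.cong refl pr)
  also have "\<dots> = (F x N (e-1) + F x N (e+1)) / (x + of_int e)"
    unfolding F_def add_divide_distrib sum_divide_distrib by (simp add: sum.union_disjoint lp_finite disj)
  finally show ?thesis .
qed

lemma nz_int: "x \<notin> \<int> \<Longrightarrow> x + of_int e \<noteq> (0::complex)"
proof
  assume "x \<notin> \<int>" "x + of_int e = 0"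
  then have "x = of_int (- e)" by (simp add: eq_neg_iff_add_eq_0)
  then show False using \<open>x \<notin> \<int>\<close> by auto
qed

lemma main:
  assumes x: "x \<notin> \<int>"
  shows "p + m = N \<Longrightarrow> F x N (int p - int m) = of_nat (N choose p)
           / ((\<Prod>i=1..p. (x + of_nat i)) * (\<Prod>j=1..m. (x - of_nat j)))"
proof (induction N arbitrary: p m)
  case 0
  then have "lattice_paths 0 0 = {[]}" by (auto simp: lattice_paths_def)
  then show ?case using 0 by (simp add: F_def)
next
  case (Suc N)
  define P where "P p = (\<Prod>i=1..p. (x + of_nat i))" for p
  define M where "M m = (\<Prod>j=1..m. (x - of_nat j))" for m
  have Pnz: "P p \<noteq> 0" for p unfolding P_def
    using nz_int[OF x, of "int _"] by (auto simp: prod_zero_iff)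
  have Mnz: "M m \<noteq> 0" for m unfolding M_def
    using nz_int[OF x, of "- int _"] by (auto simp: prod_zero_iff)
  have PS: "P (Suc p) = P p * (x + of_nat (Suc p))" for p
    unfolding P_def by (simp add: prod.nat_ivl_Suc')
  have MS: "M (Suc m) = M m * (x - of_nat (Suc m))" for m
    unfolding M_def by (simp add: prod.nat_ivl_Suc')
  define e where "e = int p - int m"
  have enz: "x + of_int e \<noteq> 0" using nz_int[OF x] .
  show ?case
  proof (cases p)
    case 0
    then have m: "m = Suc N" using Suc by simp
    have "F x N (e-1) = 0" unfolding F_def using lp_empty[of N "e-1"] by (simp add: e_def 0 m)
    moreover have "F x N (e+1) = 1 / M N"
      using Suc.IH[of 0 N] by (simp add: e_def 0 m M_def)
    ultimately have "F x (Suc N) e = 1 / M N / (x - of_nat (Suc N))"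
      by (simp add: F_Suc e_def 0 m)
    then show ?thesis using MS[of N] by (simp add: e_def 0 m M_def)
  next
    case (Suc p')
    show ?thesis
    proof (cases m)
      case 0
      then have p: "p = Suc N" using Suc.prems by simp
      have "F x N (e+1) = 0" unfolding F_def using lp_empty[of N "e+1"] by (simp add: e_def 0 p)
      moreover have "F x N (e-1) = 1 / P N"
        using Suc.IH[of N 0] by (simp add: e_def 0 p P_def)
      ultimately have "F x (Suc N) e = 1 / P N / (x + of_nat (Suc N))"
        by (simp add: F_Suc e_def 0 p)
      then show ?thesis using PS[of N] by (simp add: e_def 0 p P_def)
    next
      case (Suc m')
      have N: "N = Suc (p' + m')" using Suc.prems \<open>p = Suc p'\<close> Suc by simp
      have e1: "e - 1 = int p' - int m" "e + 1 = int p - int m'"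
        using \<open>p = Suc p'\<close> Suc by (auto simp: e_def)
      have A: "F x N (e-1) = of_nat (N choose p') / (P p' * M m)"
        unfolding e1 P_def M_def by (rule Suc.IH) (use N \<open>p = Suc p'\<close> Suc in simp)
      have B: "F x N (e+1) = of_nat (N choose p) / (P p * M m')"
        unfolding e1 P_def M_def by (rule Suc.IH) (use N \<open>p = Suc p'\<close> Suc in simp)
      have key: "p * (N choose p) = m * (N choose p')"
        using Suc_times_binomial_add[of p' m'] N \<open>p = Suc p'\<close> Suc by simp
      have key': "of_nat p * of_nat (N choose p) = (of_nat m * of_nat (N choose p') :: complex)"
        using key by (metis of_nat_mult)
      have pas: "Suc N choose p = (N choose p') + (N choose p)"
        using \<open>p = Suc p'\<close> by simp
      have ex: "x + of_int e = x + of_nat p - of_nat m" by (simp add: e_def)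
      have Pp: "P p = P p' * (x + of_nat p)" using PS \<open>p = Suc p'\<close> by simp
      have Mm: "M m = M m' * (x - of_nat m)" using MS Suc by simp
      have xp: "x + of_nat p \<noteq> 0" using nz_int[OF x, of "int p"] by simp
      have xm: "x - of_nat m \<noteq> 0" using nz_int[OF x, of "- int m"] by simp
      have "F x (Suc N) e = (of_nat (N choose p') / (P p' * M m) + of_nat (N choose p) / (P p * M m'))
              / (x + of_int e)" by (simp add: F_Suc A B)
      also have "\<dots> = of_nat (Suc N choose p) / (P p * M m)"
      proof -
        define a where "a = (of_nat (N choose p') :: complex)"
        define b where "b = (of_nat (N choose p) :: complex)"
        have k: "of_nat p * b = of_nat m * a" using key' by (simp add: a_def b_def)
        have s1: "a / (P p' * M m) = a * (x + of_nat p) / (P p * M m)"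
          unfolding Pp using xp Pnz[of p'] Mnz[of m] by simp
        have s2: "b / (P p * M m') = b * (x - of_nat m) / (P p * M m)"
          unfolding Mm using xm Pnz[of p] Mnz[of m'] by simp
        have s3: "a * (x + of_nat p) + b * (x - of_nat m) = (a + b) * (x + of_nat p - of_nat m)"
          using k by (simp add: algebra_simps)
        have "(a / (P p' * M m) + b / (P p * M m')) / (x + of_int e)
             = ((a + b) * (x + of_nat p - of_nat m)) / (P p * M m) / (x + of_nat p - of_nat m)"
          unfolding s1 s2 ex s3[symmetric] by (simp add: add_divide_distrib)
        also have "\<dots> = (a + b) / (P p * M m)" using enz[unfolded ex] by simp
        finally show ?thesis unfolding pas a_def b_def by simp
      qed
      finally show ?thesis by (simp add: e_def P_def M_def)
    qed
  qed
qed

theorem mainTheorem11: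
  fixes kp km :: nat and x :: complex
  assumes "kp + km \<ge> 1"
    and "x \<notin> \<int>"
  shows "(\<Sum>cs\<in>lattice_paths (kp + km) (int kp - int km).
            \<Prod>i<kp + km. 1 / (x + of_int (cs ! i)))
         = of_nat ((kp + km) choose kp)
           / ((\<Prod>i=1..kp. (x + of_nat i)) * (\<Prod>j=1..km. (x - of_nat j)))"
  using main[OF assms(2), of kp km "kp + km"] unfolding F_def by simp

end
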